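(* Consider the discrete first-price auction in the model without ties, with values drawn i.i.d. from a distribution with full support on $X$. If $\beta$ and $\beta'$ are both symmetric equilibrium bidding functions with $\beta(1)=\beta'(1)$, then $\beta=\beta'$. That is, the SE (if it exists) is unique up to the choice of $\beta(1)\in\{0,1\}$.
   Context: Model. There are $n\ge 2$ risk-neutral bidders competing for one indivisible object. Normalise the grid so that values and bids lie in $X=\{0,1,2,\dots,x\}$ for some $x\in\mathbb N$. Each bidder $i$ privately learns a value $v_i\in X$; values are drawn independently from a common distribution in which every element of $X$ has strictly positive probability. Each bidder submits a bid $b_i\in X$. A (pure) strategy is a bidding function $\beta:X\to X$. In the model without ties, bidder $i$ wins iff $b_i>b_j$ for all $j\neq i$ (if the highest bid is tied, nobody wins). In the first-price auction, a bidder with value $v_i$ bidding $b_i$ gets expected payoff $(v_i-b_i)\Pr(i\text{ wins})$. An equilibrium is a profile of bidding functions such that each bidder's bidding function maximises their expected payoff given the others' bidding functions (a pure-strategy Bayes–Nash equilibrium) and such that no bidder uses a weakly dominated bidding function (a bidding function is weakly dominated if some other bidding function yields at least as high expected payoff against every profile of opponents' bidding functions, and strictly higher against some). A symmetric equilibrium (SE) is an equilibrium in which all bidders use the same bidding function $\beta$. *)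

theory Defs
  imports Main "HOL-Library.Multiset" Complex_Main
begin

text \<open>Grid X = {0..x}.
  A bidding function is a map nat => nat whose restriction to X lands in X
  (only its values on X matter).\<close>

definition bidfun :: "nat \<Rightarrow> (nat \<Rightarrow> nat) \<Rightarrow> bool" where
  "bidfun x \<beta> \<longleftrightarrow> (\<forall>v\<le>x. \<beta> v \<le> x)"

definition full_support_dist :: "nat \<Rightarrow> (nat \<Rightarrow> real) \<Rightarrow> bool" where
  "full_support_dist x p \<longleftrightarrow> (\<forall>v\<le>x. p v > 0) \<and> (\<Sum>v\<le>x. p v) = 1"

definition prob_below :: "nat \<Rightarrow> (nat \<Rightarrow> real) \<Rightarrow> (nat \<Rightarrow> nat) \<Rightarrow> nat \<Rightarrow> real" where
  "prob_below x p g b = (\<Sum>w\<in>{w. w \<le> x \<and> g w < b}. p w)"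

text \<open>Opponents are indexed 0..n-2; G j is the bidding function of opponent j.
  Values are independent, so the winning probability (strictly highest bid,
  no ties) is a product.\<close>
definition win_prob :: "nat \<Rightarrow> nat \<Rightarrow> (nat \<Rightarrow> real) \<Rightarrow> (nat \<Rightarrow> nat \<Rightarrow> nat) \<Rightarrow> nat \<Rightarrow> real" where
  "win_prob n x p G b = (\<Prod>j<n-1. prob_below x p (G j) b)"

definition opp_profile :: "nat \<Rightarrow> nat \<Rightarrow> (nat \<Rightarrow> nat \<Rightarrow> nat) \<Rightarrow> bool" where
  "opp_profile n x G \<longleftrightarrow> (\<forall>j<n-1. bidfun x (G j))"

definition payoff :: "nat \<Rightarrow> nat \<Rightarrow> (nat \<Rightarrow> real) \<Rightarrow> (nat \<Rightarrow> nat) \<Rightarrow> (nat \<Rightarrow> nat \<Rightarrow> nat) \<Rightarrow> real" where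
  "payoff n x p \<beta> G = (\<Sum>v\<le>x. p v * (real v - real (\<beta> v)) * win_prob n x p G (\<beta> v))"

definition weakly_dominated :: "nat \<Rightarrow> nat \<Rightarrow> (nat \<Rightarrow> real) \<Rightarrow> (nat \<Rightarrow> nat) \<Rightarrow> bool" where
  "weakly_dominated n x p \<beta> \<longleftrightarrow>
     (\<exists>\<beta>'. bidfun x \<beta>' \<and>
        (\<forall>G. opp_profile n x G \<longrightarrow> payoff n x p \<beta> G \<le> payoff n x p \<beta>' G) \<and>
        (\<exists>G. opp_profile n x G \<and> payoff n x p \<beta> G < payoff n x p \<beta>' G))"

definition symmetric_equilibrium :: "nat \<Rightarrow> nat \<Rightarrow> (nat \<Rightarrow> real) \<Rightarrow> (nat \<Rightarrow> nat) \<Rightarrow> bool" where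
  "symmetric_equilibrium n x p \<beta> \<longleftrightarrow>
     bidfun x \<beta> \<and>
     (\<forall>\<beta>'. bidfun x \<beta>' \<longrightarrow> payoff n x p \<beta>' (\<lambda>_. \<beta>) \<le> payoff n x p \<beta> (\<lambda>_. \<beta>)) \<and>
     \<not> weakly_dominated n x p \<beta>"

end

theory Submission
  imports Defs
begin

lemma pb_nonneg:
  assumes "full_support_dist x p"
  shows "prob_below x p g b \<ge> 0"
  unfolding prob_below_def
  using assms unfolding full_support_dist_def
  by (intro sum_nonneg) (auto intro: less_imp_le)

lemma pb_mono:
  assumes "full_support_dist x p" "b \<le> b'"
  shows "prob_below x p g b \<le> prob_below x p g b'"
  unfolding prob_below_def
proof (rule sum_mono2)
  show "finite {w. w \<le> x \<and> g w < b'}" by simp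
  show "{w. w \<le> x \<and> g w < b} \<subseteq> {w. w \<le> x \<and> g w < b'}" using assms(2) by auto
  show "\<And>w. w \<in> {w. w \<le> x \<and> g w < b'} - {w. w \<le> x \<and> g w < b} \<Longrightarrow> 0 \<le> p w"
    using assms(1) unfolding full_support_dist_def by (auto intro: less_imp_le)
qed

lemma pb_zero: "prob_below x p g 0 = 0"
  unfolding prob_below_def by simp

lemma pb_const0:
  assumes "full_support_dist x p" "b \<ge> 1"
  shows "prob_below x p (\<lambda>_. 0) b = 1"
proof -
  have "{w. w \<le> x \<and> (0::nat) < b} = {..x}" using assms(2) by auto
  then show ?thesis using assms(1) unfolding prob_below_def full_support_dist_def by simp
qed

lemma wp_sym: "win_prob n x p (\<lambda>_. \<beta>) c = prob_below x p \<beta> c ^ (n-1)"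
  unfolding win_prob_def by simp

lemma wp_nonneg:
  assumes "full_support_dist x p"
  shows "win_prob n x p G c \<ge> 0"
  unfolding win_prob_def using pb_nonneg[OF assms] by (simp add: prod_nonneg)

lemma wp_zero:
  assumes "n \<ge> 2"
  shows "win_prob n x p G 0 = 0"
  unfolding win_prob_def pb_zero using assms by simp

lemma wp_const0:
  assumes "full_support_dist x p" "c \<ge> 1"
  shows "win_prob n x p (\<lambda>_ _. 0) c = 1"
  unfolding win_prob_def using pb_const0[OF assms] by simp

lemma payoff_upd:
  assumes "v \<le> x"
  shows "payoff n x p (\<beta>(v:=c)) G = payoff n x p \<beta> G
     + p v * ((real v - real c) * win_prob n x p G c - (real v - real (\<beta> v)) * win_prob n x p G (\<beta> v))"
proof -
  let ?f' = "\<lambda>w. p w * (real w - real ((\<beta>(v:=c)) w)) * win_prob n x p G ((\<beta>(v:=c)) w)"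
  let ?f = "\<lambda>w. p w * (real w - real (\<beta> w)) * win_prob n x p G (\<beta> w)"
  let ?d = "p v * ((real v - real c) * win_prob n x p G c - (real v - real (\<beta> v)) * win_prob n x p G (\<beta> v))"
  have "(\<Sum>w\<le>x. ?f' w) - (\<Sum>w\<le>x. ?f w) = (\<Sum>w\<le>x. ?f' w - ?f w)"
    by (simp add: sum_subtractf)
  also have "\<dots> = (\<Sum>w\<le>x. if w = v then ?d else 0)"
    by (rule sum.cong) (auto simp: algebra_simps)
  also have "\<dots> = ?d" using assms by simp
  finally show ?thesis unfolding payoff_def by simp
qed

lemma br:
  assumes "full_support_dist x p" "symmetric_equilibrium n x p \<beta>" "v \<le> x" "c \<le> x"
  shows "(real v - real c) * win_prob n x p (\<lambda>_. \<beta>) c \<le> (real v - real (\<beta> v)) * win_prob n x p (\<lambda>_. \<beta>) (\<beta> v)"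
proof -
  have bf: "bidfun x \<beta>" and opt: "\<And>\<beta>'. bidfun x \<beta>' \<Longrightarrow> payoff n x p \<beta>' (\<lambda>_. \<beta>) \<le> payoff n x p \<beta> (\<lambda>_. \<beta>)"
    using assms(2) unfolding symmetric_equilibrium_def by auto
  have "bidfun x (\<beta>(v:=c))" using bf assms(4) unfolding bidfun_def by auto
  from opt[OF this] have "p v * ((real v - real c) * win_prob n x p (\<lambda>_. \<beta>) c - (real v - real (\<beta> v)) * win_prob n x p (\<lambda>_. \<beta>) (\<beta> v)) \<le> 0"
    unfolding payoff_upd[OF assms(3)] by simp
  moreover have "p v > 0" using assms(1,3) unfolding full_support_dist_def by auto
  ultimately show ?thesis by (simp add: mult_le_0_iff)
qed

lemma nd:
  assumes "n \<ge> 2" "full_support_dist x p" "symmetric_equilibrium n x p \<beta>" "v \<le> x"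
  shows "\<beta> v \<le> v \<and> (2 \<le> v \<longrightarrow> \<beta> v < v)"
proof (rule ccontr)
  assume H: "\<not> (\<beta> v \<le> v \<and> (2 \<le> v \<longrightarrow> \<beta> v < v))"
  have bf: "bidfun x \<beta>" and nwd: "\<not> weakly_dominated n x p \<beta>"
    using assms(3) unfolding symmetric_equilibrium_def by auto
  have pv: "p v > 0" using assms(2,4) unfolding full_support_dist_def by auto
  define c where "c = (if \<beta> v > v then 0 else v - 1)"
  have cx: "c \<le> x" using assms(4) unfolding c_def by auto
  define d where "d = (\<lambda>G. (real v - real c) * win_prob n x p G c - (real v - real (\<beta> v)) * win_prob n x p G (\<beta> v))"
  have dge: "d G \<ge> 0" if "opp_profile n x G" for G
  proof (cases "\<beta> v > v")
    case True
    then have "c = 0" unfolding c_def by simp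
    then show ?thesis unfolding d_def using True wp_zero[OF assms(1)] wp_nonneg[OF assms(2), of n G "\<beta> v"]
      by (simp add: mult_nonpos_nonneg)
  next
    case False
    then have "\<beta> v = v" "2 \<le> v" using H by auto
    then show ?thesis unfolding d_def c_def using False wp_nonneg[OF assms(2), of n G "v - 1"] by simp
  qed
  have dgt: "d (\<lambda>_ _. 0) > 0"
  proof (cases "\<beta> v > v")
    case True
    then have "c = 0" unfolding c_def by simp
    then show ?thesis unfolding d_def using True wp_zero[OF assms(1)] wp_const0[OF assms(2), of "\<beta> v" n] by simp
  next
    case False
    then have "\<beta> v = v" "2 \<le> v" using H by auto
    then show ?thesis unfolding d_def c_def using False wp_const0[OF assms(2), of "v - 1" n] by simp
  qed
  have op0: "opp_profile n x (\<lambda>_ _. 0)" unfolding opp_profile_def bidfun_def by simp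
  have "weakly_dominated n x p \<beta>"
    unfolding weakly_dominated_def
  proof (intro exI conjI allI impI)
    show "bidfun x (\<beta>(v:=c))" using bf cx unfolding bidfun_def by auto
    fix G assume "opp_profile n x G"
    then show "payoff n x p \<beta> G \<le> payoff n x p (\<beta>(v:=c)) G"
      unfolding payoff_upd[OF assms(4)] using dge[of G] pv unfolding d_def by simp
  next
    show "opp_profile n x (\<lambda>_ _. 0)" by (rule op0)
    show "payoff n x p \<beta> (\<lambda>_ _. 0) < payoff n x p (\<beta>(v:=c)) (\<lambda>_ _. 0)"
      unfolding payoff_upd[OF assms(4)] using dgt pv unfolding d_def by simp
  qed
  with nwd show False by simp
qed

lemma pb_pos:
  assumes "full_support_dist x p" "w \<le> x" "g w < b"
  shows "prob_below x p g b > 0"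
proof -
  have "p w \<le> prob_below x p g b"
    unfolding prob_below_def
    using assms unfolding full_support_dist_def
    by (intro member_le_sum) (auto intro: less_imp_le)
  moreover have "p w > 0" using assms unfolding full_support_dist_def by auto
  ultimately show ?thesis by simp
qed

lemma real_mono_aux:
  fixes v v' b b' A B :: real
  assumes "v < v'" "b' < b" "A > 0" "B \<le> A"
    "(v - b') * B \<le> (v - b) * A" "(v' - b) * A \<le> (v' - b') * B"
  shows False
proof -
  have "(v - v') * A \<ge> (v - v') * B" using assms(5,6) by (simp add: algebra_simps)
  then have "A \<le> B" using assms(1) by (simp add: mult_le_cancel_left)
  then have "A = B" using assms(4) by simp
  then have "(b - b') * A \<le> 0" using assms(5) by (simp add: algebra_simps)
  then show False using assms(2,3) by (simp add: mult_le_0_iff)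
qed

lemma mono_se:
  assumes "n \<ge> 2" "full_support_dist x p" "symmetric_equilibrium n x p \<beta>" "v < v'" "v' \<le> x"
  shows "\<beta> v \<le> \<beta> v'"
proof (rule ccontr)
  assume "\<not> \<beta> v \<le> \<beta> v'"
  then have lt: "\<beta> v' < \<beta> v" by simp
  have bf: "bidfun x \<beta>" using assms(3) unfolding symmetric_equilibrium_def by auto
  let ?W = "win_prob n x p (\<lambda>_. \<beta>)"
  have h1: "(real v - real (\<beta> v')) * ?W (\<beta> v') \<le> (real v - real (\<beta> v)) * ?W (\<beta> v)"
    using br[OF assms(2,3), of v "\<beta> v'"] assms bf unfolding bidfun_def by auto
  have h2: "(real v' - real (\<beta> v)) * ?W (\<beta> v) \<le> (real v' - real (\<beta> v')) * ?W (\<beta> v')"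
    using br[OF assms(2,3), of v' "\<beta> v"] assms bf unfolding bidfun_def by auto
  have "prob_below x p \<beta> (\<beta> v) > 0" using pb_pos[OF assms(2,5), of \<beta> "\<beta> v"] lt by simp
  then have A: "?W (\<beta> v) > 0" unfolding wp_sym by simp
  have B: "?W (\<beta> v') \<le> ?W (\<beta> v)" unfolding wp_sym
    using pb_mono[OF assms(2), of "\<beta> v'" "\<beta> v" \<beta>] lt pb_nonneg[OF assms(2)]
    by (intro power_mono) auto
  show False using real_mono_aux[OF _ _ A B h1 h2] assms(4) lt by simp
qed

lemma step:
  assumes "n \<ge> 2" "full_support_dist x p" "symmetric_equilibrium n x p \<beta>"
    "symmetric_equilibrium n x p \<beta>'" "1 \<le> v" "Suc v \<le> x"
    "\<forall>w\<le>v. \<beta> w = \<beta>' w" "\<beta> (Suc v) < \<beta>' (Suc v)"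
  shows False
proof -
  define b where "b = \<beta> (Suc v)"
  define b' where "b' = \<beta>' (Suc v)"
  have bb: "b < b'" using assms(8) unfolding b_def b'_def .
  have bf: "bidfun x \<beta>" "bidfun x \<beta>'" using assms(3,4) unfolding symmetric_equilibrium_def by auto
  have m: "\<And>w w'. w \<le> w' \<Longrightarrow> w' \<le> x \<Longrightarrow> \<beta> w \<le> \<beta> w'"
    using mono_se[OF assms(1,2,3)] by (metis le_eq_less_or_eq)
  have m': "\<And>w w'. w \<le> w' \<Longrightarrow> w' \<le> x \<Longrightarrow> \<beta>' w \<le> \<beta>' w'"
    using mono_se[OF assms(1,2,4)] by (metis le_eq_less_or_eq)
  have s1: "{w. w \<le> x \<and> \<beta> w < b} = {w. w \<le> x \<and> \<beta>' w < b}"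
  proof (intro set_eqI iffI)
    fix w assume w: "w \<in> {w. w \<le> x \<and> \<beta> w < b}"
    show "w \<in> {w. w \<le> x \<and> \<beta>' w < b}"
    proof (cases "w \<le> v")
      case True then show ?thesis using w assms(7) by auto
    next
      case False then have "Suc v \<le> w" by simp
      then have "b \<le> \<beta> w" using m w unfolding b_def by auto
      then show ?thesis using w by auto
    qed
  next
    fix w assume w: "w \<in> {w. w \<le> x \<and> \<beta>' w < b}"
    show "w \<in> {w. w \<le> x \<and> \<beta> w < b}"
    proof (cases "w \<le> v")
      case True then show ?thesis using w assms(7) by auto
    next
      case False then have "Suc v \<le> w" by simp
      then have "b' \<le> \<beta>' w" using m' w unfolding b'_def by auto
      then show ?thesis using w bb by auto
    qed
  qed
  have s2: "{w. w \<le> x \<and> \<beta>' w < b'} = {..v}"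
  proof (intro set_eqI iffI)
    fix w assume w: "w \<in> {w. w \<le> x \<and> \<beta>' w < b'}"
    show "w \<in> {..v}"
    proof (rule ccontr)
      assume "w \<notin> {..v}" then have "Suc v \<le> w" by simp
      then have "b' \<le> \<beta>' w" using m' w unfolding b'_def by auto
      then show False using w by auto
    qed
  next
    fix w assume w: "w \<in> {..v}"
    then have "\<beta>' w = \<beta> w" using assms(7) by auto
    also have "\<dots> \<le> b" using m[of w "Suc v"] w assms(6) unfolding b_def by auto
    finally show "w \<in> {w. w \<le> x \<and> \<beta>' w < b'}" using w bb assms(6) by auto
  qed
  have s3: "{..Suc v} \<subseteq> {w. w \<le> x \<and> \<beta> w < b'}"
  proof
    fix w assume w: "w \<in> {..Suc v}"
    then have "\<beta> w \<le> b" using m[of w "Suc v"] assms(6) unfolding b_def by auto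
    then show "w \<in> {w. w \<le> x \<and> \<beta> w < b'}" using w bb assms(6) by auto
  qed
  have pos: "\<And>w. w \<le> x \<Longrightarrow> p w > 0" using assms(2) unfolding full_support_dist_def by auto
  have Feq: "prob_below x p \<beta> b = prob_below x p \<beta>' b" unfolding prob_below_def s1 ..
  have F'b': "prob_below x p \<beta>' b' = (\<Sum>w\<le>v. p w)" unfolding prob_below_def s2 ..
  have "(\<Sum>w\<le>Suc v. p w) \<le> prob_below x p \<beta> b'"
    unfolding prob_below_def
    by (rule sum_mono2[OF _ s3]) (auto intro: less_imp_le pos)
  moreover have "(\<Sum>w\<le>Suc v. p w) = (\<Sum>w\<le>v. p w) + p (Suc v)" by simp
  moreover have "p (Suc v) > 0" using pos assms(6) by simp
  ultimately have Fgt: "prob_below x p \<beta>' b' < prob_below x p \<beta> b'" using F'b' by simp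
  have W1: "win_prob n x p (\<lambda>_. \<beta>') b' < win_prob n x p (\<lambda>_. \<beta>) b'"
    unfolding wp_sym using Fgt pb_nonneg[OF assms(2)] assms(1)
    by (intro power_strict_mono) auto
  have W2: "win_prob n x p (\<lambda>_. \<beta>) b = win_prob n x p (\<lambda>_. \<beta>') b"
    unfolding wp_sym Feq ..
  have bx: "b \<le> x" "b' \<le> x" using bf assms(6) unfolding bidfun_def b_def b'_def by auto
  have h1: "(real (Suc v) - real b') * win_prob n x p (\<lambda>_. \<beta>) b' \<le> (real (Suc v) - real b) * win_prob n x p (\<lambda>_. \<beta>) b"
    using br[OF assms(2,3) assms(6) bx(2)] unfolding b_def by simp
  have h2: "(real (Suc v) - real b) * win_prob n x p (\<lambda>_. \<beta>') b \<le> (real (Suc v) - real b') * win_prob n x p (\<lambda>_. \<beta>') b'"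
    using br[OF assms(2,4) assms(6) bx(1)] unfolding b'_def by simp
  have "b' < Suc v" using nd[OF assms(1,2,4,6)] assms(5) unfolding b'_def by auto
  then have pos': "real (Suc v) - real b' > 0" by simp
  from h1 h2 W2 have "(real (Suc v) - real b') * win_prob n x p (\<lambda>_. \<beta>) b' \<le> (real (Suc v) - real b') * win_prob n x p (\<lambda>_. \<beta>') b'"
    by simp
  then have "win_prob n x p (\<lambda>_. \<beta>) b' \<le> win_prob n x p (\<lambda>_. \<beta>') b'"
    using pos' by (simp add: mult_le_cancel_left)
  with W1 show False by simp
qed

theorem lemma5:
  fixes n x :: nat and p :: "nat \<Rightarrow> real" and \<beta> \<beta>' :: "nat \<Rightarrow> nat"
  assumes "n \<ge> 2"
    and "full_support_dist x p"
    and "symmetric_equilibrium n x p \<beta>"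
    and "symmetric_equilibrium n x p \<beta>'"
    and "\<beta> 1 = \<beta>' 1"
  shows "\<forall>v\<le>x. \<beta> v = \<beta>' v"
proof -
  have "v \<le> x \<longrightarrow> (\<forall>w\<le>v. \<beta> w = \<beta>' w)" for v
  proof (induction v)
    case 0
    show ?case using nd[OF assms(1,2,3), of 0] nd[OF assms(1,2,4), of 0] by auto
  next
    case (Suc v)
    show ?case
    proof
      assume sx: "Suc v \<le> x"
      then have IH: "\<forall>w\<le>v. \<beta> w = \<beta>' w" using Suc.IH by simp
      have "\<beta> (Suc v) = \<beta>' (Suc v)"
      proof (cases "v = 0")
        case True then show ?thesis using assms(5) by simp
      next
        case False
        then have v1: "1 \<le> v" by simp
        show ?thesis
        proof (rule linorder_cases[of "\<beta> (Suc v)" "\<beta>' (Suc v)"])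
          assume "\<beta> (Suc v) < \<beta>' (Suc v)"
          from step[OF assms(1,2,3,4) v1 sx IH this] show ?thesis ..
        next
          assume "\<beta>' (Suc v) < \<beta> (Suc v)"
          from step[OF assms(1,2,4,3) v1 sx _ this] IH show ?thesis by auto
        qed
      qed
      then show "\<forall>w\<le>Suc v. \<beta> w = \<beta>' w" using IH by (auto simp: le_Suc_eq)
    qed
  qed
  then show ?thesis by auto
qed

end
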